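(* Let $v\in\mathbb V^N$ be a component additive network game and $\rho\in\mathbb P^N$. Then $\mathbb E(v,\rho)=\sum_{h\in C(g(\rho))}\ \sum_{h'\subseteq h}\rho_h(h')\cdot v(h')$.
   Context: $N=\{1,\dots,n\}$ is a finite player set. A link is an unordered pair $ij=\{i,j\}$ of distinct players; $g_N$ is the set of all links; a network is any $g\subseteq g_N$; $\mathbb G^N$ is the set of all networks. For a network $g$, $N(g)$ is the set of players with at least one link in $g$. A component of $g$ is a nonempty subnetwork $h\subseteq g$ that is connected (any two players of $N(h)$ are joined by a path in $h$) and maximal (if $i\in N(h)$ and $ij\in g$ then $ij\in h$); $C(g)$ is the set of components of $g$ (empty for the empty network). A network formation probability distribution is $\rho\colon\mathbb G^N\to[0,1]$ with $\sum_g\rho(g)=1$; $\mathbb P^N$ is the set of these. $\mathbb G(\rho)=\{g:\rho(g)>0\}$, and the extent is $g(\rho)=\bigcup_{g\in\mathbb G(\rho)}g$. For a network $g$, the restriction $\rho_g$ is $\rho_g(h)=\sum_{h'\subseteq g_N\setminus g}\rho(h\cup h')$ if $h\subseteq g$ and $\rho_g(h)=0$ otherwise. A network game is $v\colon\mathbb G^N\to\mathbb R$ with $v(\varnothing)=0$; $\mathbb V^N$ is the set of these; $v$ is component additive if $v(g)=\sum_{h\in C(g)}v(h)$ for all $g$. The expected wealth is $\mathbb E(v,\rho)=\sum_{g\in\mathbb G^N}\rho(g)\,v(g)$. *)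

theory Defs
  imports Main "HOL-Analysis.Analysis"
begin

(* Players are 1..n (naturals); a link ij is the two-element set {i,j}; a network is a set of links. *)

definition players :: "nat \<Rightarrow> nat set" where
  "players n = {1..n}"

definition complete_net :: "nat \<Rightarrow> nat set set" where
  "complete_net n = {{i, j} | i j. i \<in> players n \<and> j \<in> players n \<and> i \<noteq> j}"

definition networks :: "nat \<Rightarrow> nat set set set" where
  "networks n = Pow (complete_net n)"

definition net_players :: "nat set set \<Rightarrow> nat set" where
  "net_players g = \<Union> g"

definition adj :: "nat set set \<Rightarrow> (nat \<times> nat) set" where
  "adj h = {(i, j). {i, j} \<in> h}"

definition connected_net :: "nat set set \<Rightarrow> bool" where
  "connected_net h \<longleftrightarrow> (\<forall>i\<in>net_players h. \<forall>j\<in>net_players h. (i, j) \<in> (adj h)\<^sup>*)"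

definition components :: "nat set set \<Rightarrow> nat set set set" where
  "components g = {h. h \<noteq> {} \<and> h \<subseteq> g \<and> connected_net h \<and>
      (\<forall>i\<in>net_players h. \<forall>l\<in>g. i \<in> l \<longrightarrow> l \<in> h)}"

definition is_prob_dist :: "nat \<Rightarrow> (nat set set \<Rightarrow> real) \<Rightarrow> bool" where
  "is_prob_dist n \<rho> \<longleftrightarrow> (\<forall>g\<in>networks n. 0 \<le> \<rho> g \<and> \<rho> g \<le> 1) \<and> (\<Sum>g\<in>networks n. \<rho> g) = 1"

definition support :: "nat \<Rightarrow> (nat set set \<Rightarrow> real) \<Rightarrow> nat set set set" where
  "support n \<rho> = {g \<in> networks n. \<rho> g > 0}"

definition extent :: "nat \<Rightarrow> (nat set set \<Rightarrow> real) \<Rightarrow> nat set set" where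
  "extent n \<rho> = \<Union> (support n \<rho>)"

definition restrict_dist :: "nat \<Rightarrow> (nat set set \<Rightarrow> real) \<Rightarrow> nat set set \<Rightarrow> nat set set \<Rightarrow> real" where
  "restrict_dist n \<rho> g h =
     (if h \<subseteq> g then (\<Sum>h'\<in>Pow (complete_net n - g). \<rho> (h \<union> h')) else 0)"

definition is_network_game :: "nat \<Rightarrow> (nat set set \<Rightarrow> real) \<Rightarrow> bool" where
  "is_network_game n v \<longleftrightarrow> v {} = 0"

definition component_additive :: "nat \<Rightarrow> (nat set set \<Rightarrow> real) \<Rightarrow> bool" where
  "component_additive n v \<longleftrightarrow> (\<forall>g\<in>networks n. v g = (\<Sum>h\<in>components g. v h))"

definition expected_wealth :: "nat \<Rightarrow> (nat set set \<Rightarrow> real) \<Rightarrow> (nat set set \<Rightarrow> real) \<Rightarrow> real" where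
  "expected_wealth n v \<rho> = (\<Sum>g\<in>networks n. \<rho> g * v g)"

end

theory Submission
  imports Defs
begin

lemma adj_sym: "(a, b) \<in> (adj h)\<^sup>* \<Longrightarrow> (b, a) \<in> (adj h)\<^sup>*"
proof -
  have "sym (adj h)" unfolding adj_def sym_def by (auto simp: insert_commute)
  then have "sym ((adj h)\<^sup>*)" by (rule sym_rtrancl)
  moreover assume "(a, b) \<in> (adj h)\<^sup>*"
  ultimately show ?thesis by (meson symD)
qed

lemma adj_sub: "h \<subseteq> g \<Longrightarrow> adj h \<subseteq> adj g" unfolding adj_def by auto
lemma adj_mono: "h \<subseteq> g \<Longrightarrow> (a, b) \<in> (adj h)\<^sup>* \<Longrightarrow> (a, b) \<in> (adj g)\<^sup>*"
  using rtrancl_mono[OF adj_sub] by blast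

lemma comp_reach:
  assumes H: "H \<in> components E" and a: "a \<in> net_players H"
    and r: "(a, b) \<in> (adj E)\<^sup>*"
  shows "b \<in> net_players H"
  using r
proof (induction rule: rtrancl_induct)
  case base then show ?case using a .
next
  case (step x y)
  then have "{x, y} \<in> E" by (simp add: adj_def)
  with step.IH H have "{x, y} \<in> H" unfolding components_def by auto
  then show ?case unfolding net_players_def by auto
qed

lemma complete_net_link: "l \<in> complete_net n \<Longrightarrow> \<exists>x y. l = {x, y} \<and> x \<noteq> y"
  unfolding complete_net_def by blast

lemma comp_unique:
  assumes H1: "H1 \<in> components E" and H2: "H2 \<in> components E"
    and E: "E \<subseteq> complete_net n"
    and i1: "i \<in> net_players H1" and i2: "i \<in> net_players H2"
  shows "H1 \<subseteq> H2"
proof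
  fix l assume l: "l \<in> H1"
  have "H1 \<subseteq> E" using H1 unfolding components_def by auto
  with l E obtain x y where "l = {x, y}" using complete_net_link by blast
  then obtain j where j: "j \<in> l" by blast
  have jp: "j \<in> net_players H1" using l j unfolding net_players_def by auto
  have "(i, j) \<in> (adj H1)\<^sup>*" using H1 i1 jp unfolding components_def connected_net_def by auto
  then have "(i, j) \<in> (adj E)\<^sup>*" using adj_mono \<open>H1 \<subseteq> E\<close> by blast
  then have "j \<in> net_players H2" using comp_reach H2 i2 by blast
  moreover have "l \<in> E" using l \<open>H1 \<subseteq> E\<close> by auto
  ultimately show "l \<in> H2" using H2 j unfolding components_def by auto
qed

lemma comp_exists:
  assumes C: "C \<in> components g" and gE: "g \<subseteq> E" and E: "E \<subseteq> complete_net n"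
  shows "\<exists>H\<in>components E. C \<subseteq> H"
proof -
  obtain l0 where l0: "l0 \<in> C" using C unfolding components_def by auto
  have "l0 \<in> complete_net n" using l0 C gE E unfolding components_def by auto
  then obtain i where i: "i \<in> l0" using complete_net_link by blast
  define R where "R = {j. (i, j) \<in> (adj E)\<^sup>*}"
  define H where "H = {l \<in> E. l \<inter> R \<noteq> {}}"
  have plR: "net_players H \<subseteq> R"
  proof
    fix a assume "a \<in> net_players H"
    then obtain l where l: "l \<in> E" "a \<in> l" "l \<inter> R \<noteq> {}" unfolding net_players_def H_def by auto
    then obtain x y where xy: "l = {x, y}" using E complete_net_link by blast
    obtain b where b: "b \<in> l" "b \<in> R" using l by auto
    show "a \<in> R"
    proof (cases "a = b")
      case True then show ?thesis using b by simp
    next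
      case False
      then have "l = {b, a}" using xy l b by auto
      then have "(b, a) \<in> adj E" using l unfolding adj_def by auto
      then show ?thesis using b unfolding R_def by (auto intro: rtrancl_into_rtrancl)
    qed
  qed
  have reachH: "(i, a) \<in> (adj H)\<^sup>*" if "a \<in> R" for a
  proof -
    have "(i, a) \<in> (adj E)\<^sup>*" using that R_def by auto
    then show ?thesis
    proof (induction rule: rtrancl_induct)
      case base then show ?case by simp
    next
      case (step x y)
      then have "{x, y} \<in> E" by (simp add: adj_def)
      moreover have "x \<in> R" using step.hyps(1) R_def by auto
      ultimately have "{x, y} \<in> H" unfolding H_def by auto
      then have "(x, y) \<in> adj H" unfolding adj_def by auto
      then show ?case using step.IH by (auto intro: rtrancl_into_rtrancl)
    qed
  qed
  have iR: "i \<in> R" unfolding R_def by simp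
  have l0H: "l0 \<in> H" using l0 C gE i iR unfolding H_def components_def by auto
  have "H \<in> components E"
    unfolding components_def
  proof (intro CollectI conjI)
    show "H \<noteq> {}" using l0H by auto
    show "H \<subseteq> E" unfolding H_def by auto
    show "connected_net H" unfolding connected_net_def
    proof (intro ballI)
      fix a b assume a: "a \<in> net_players H" and b: "b \<in> net_players H"
      have "(a, i) \<in> (adj H)\<^sup>*" using adj_sym reachH plR a by blast
      moreover have "(i, b) \<in> (adj H)\<^sup>*" using reachH plR b by blast
      ultimately show "(a, b) \<in> (adj H)\<^sup>*" by (rule rtrancl_trans)
    qed
    show "\<forall>i\<in>net_players H. \<forall>l\<in>E. i \<in> l \<longrightarrow> l \<in> H"
      using plR unfolding H_def by auto
  qed
  moreover have "C \<subseteq> H"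
  proof
    fix l assume l: "l \<in> C"
    have "l \<in> complete_net n" using l C gE E unfolding components_def by auto
    then obtain j where j: "j \<in> l" using complete_net_link by blast
    have "i \<in> net_players C" "j \<in> net_players C" using l0 i l j unfolding net_players_def by auto
    then have "(i, j) \<in> (adj C)\<^sup>*" using C unfolding components_def connected_net_def by auto
    moreover have "C \<subseteq> E" using C gE unfolding components_def by auto
    ultimately have "(i, j) \<in> (adj E)\<^sup>*" using adj_mono by blast
    then show "l \<in> H" using \<open>C \<subseteq> E\<close> l j unfolding H_def R_def by auto
  qed
  ultimately show ?thesis by blast
qed

lemma comp_inter:
  assumes H: "H \<in> components E" and gE: "g \<subseteq> E"
  shows "components (g \<inter> H) = {C \<in> components g. C \<subseteq> H}"
proof
  show "components (g \<inter> H) \<subseteq> {C \<in> components g. C \<subseteq> H}"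
  proof
    fix C assume C: "C \<in> components (g \<inter> H)"
    have "\<forall>i\<in>net_players C. \<forall>l\<in>g. i \<in> l \<longrightarrow> l \<in> C"
    proof (intro ballI impI)
      fix i l assume i: "i \<in> net_players C" and l: "l \<in> g" "i \<in> l"
      have "i \<in> net_players H" using i C unfolding components_def net_players_def by auto
      then have "l \<in> H" using H l gE unfolding components_def by auto
      then show "l \<in> C" using C i l unfolding components_def by auto
    qed
    then show "C \<in> {C \<in> components g. C \<subseteq> H}" using C unfolding components_def by auto
  qed
  show "{C \<in> components g. C \<subseteq> H} \<subseteq> components (g \<inter> H)"
    unfolding components_def by auto
qed

lemma finite_complete_net: "finite (complete_net n)"
proof -
  have "complete_net n \<subseteq> Pow (players n)" unfolding complete_net_def by auto
  moreover have "finite (Pow (players n))" unfolding players_def by simp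
  ultimately show ?thesis using finite_subset by blast
qed

lemma finite_components: "finite E \<Longrightarrow> finite (components E)"
  by (rule finite_subset[of _ "Pow E"]) (auto simp: components_def)

lemma key:
  assumes ca: "component_additive n v" and gE: "g \<subseteq> E" and E: "E \<subseteq> complete_net n"
  shows "v g = (\<Sum>H\<in>components E. v (g \<inter> H))"
proof -
  have fE: "finite E" using E finite_complete_net finite_subset by blast
  have fg: "finite g" using gE fE finite_subset by blast
  have fcE: "finite (components E)" using fE finite_components by blast
  have fcg: "finite (components g)" using fg finite_components by blast
  have "(\<Sum>H\<in>components E. v (g \<inter> H)) = (\<Sum>H\<in>components E. \<Sum>C\<in>{C \<in> components g. C \<subseteq> H}. v C)"
  proof (rule sum.cong[OF refl])
    fix H assume H: "H \<in> components E"
    have "g \<inter> H \<in> networks n" using gE E unfolding networks_def by auto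
    then have "v (g \<inter> H) = (\<Sum>C\<in>components (g \<inter> H). v C)" using ca unfolding component_additive_def by blast
    then show "v (g \<inter> H) = (\<Sum>C\<in>{C \<in> components g. C \<subseteq> H}. v C)" using comp_inter[OF H gE] by simp
  qed
  also have "\<dots> = (\<Sum>C\<in>components g. \<Sum>H\<in>{H \<in> components E. C \<subseteq> H}. v C)"
    by (rule sum.swap_restrict[OF fcE fcg])
  also have "\<dots> = (\<Sum>C\<in>components g. v C)"
  proof (rule sum.cong[OF refl])
    fix C assume C: "C \<in> components g"
    obtain H0 where H0: "H0 \<in> components E" "C \<subseteq> H0" using comp_exists[OF C gE E] by blast
    obtain l0 where l0: "l0 \<in> C" using C unfolding components_def by auto
    have "l0 \<in> complete_net n" using l0 C gE E unfolding components_def by auto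
    then obtain i where i: "i \<in> l0" using complete_net_link by blast
    have "{H \<in> components E. C \<subseteq> H} = {H0}"
    proof (intro equalityI subsetI)
      fix H assume "H \<in> {H \<in> components E. C \<subseteq> H}"
      then have H: "H \<in> components E" "C \<subseteq> H" by auto
      have "i \<in> net_players H" "i \<in> net_players H0" using H H0 l0 i unfolding net_players_def by auto
      then have "H \<subseteq> H0" "H0 \<subseteq> H" using comp_unique H H0 E by blast+
      then show "H \<in> {H0}" by auto
    qed (use H0 in auto)
    then show "(\<Sum>H\<in>{H \<in> components E. C \<subseteq> H}. v C) = v C" by simp
  qed
  also have "\<dots> = v g"
    using ca gE E unfolding component_additive_def networks_def by auto
  finally show ?thesis by simp
qed

lemma reindex:
  assumes H: "H \<subseteq> complete_net n"
  shows "(\<Sum>g\<in>networks n. \<rho> g * v (g \<inter> H)) =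
    (\<Sum>h'\<in>Pow H. restrict_dist n \<rho> H h' * v h')"
proof -
  have fc: "finite (complete_net n)" by (rule finite_complete_net)
  have fH: "finite H" using H fc finite_subset by blast
  have "(\<Sum>g\<in>networks n. \<rho> g * v (g \<inter> H)) =
      (\<Sum>p\<in>Pow H \<times> Pow (complete_net n - H). \<rho> (fst p \<union> snd p) * v (fst p))"
    unfolding networks_def
    by (rule sum.reindex_bij_witness[where j="\<lambda>g. (g \<inter> H, g - H)" and i="\<lambda>p. fst p \<union> snd p"]) (use H in \<open>auto simp: Int_Diff_Un\<close>)
  also have "\<dots> = (\<Sum>h'\<in>Pow H. \<Sum>h''\<in>Pow (complete_net n - H). \<rho> (h' \<union> h'') * v h')"
    by (subst sum.cartesian_product) (simp add: case_prod_beta)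
  also have "\<dots> = (\<Sum>h'\<in>Pow H. restrict_dist n \<rho> H h' * v h')"
    unfolding restrict_dist_def by (simp add: sum_distrib_right)
  finally show ?thesis .
qed

theorem proposition2:
  fixes n :: nat and v \<rho> :: "nat set set \<Rightarrow> real"
  assumes "is_network_game n v"
    and "component_additive n v"
    and "is_prob_dist n \<rho>"
  shows "expected_wealth n v \<rho> =
    (\<Sum>h\<in>components (extent n \<rho>). \<Sum>h'\<in>Pow h. restrict_dist n \<rho> h h' * v h')"
proof -
  define E where "E = extent n \<rho>"
  have E: "E \<subseteq> complete_net n" unfolding E_def extent_def support_def networks_def by auto
  have fE: "finite E" using E finite_complete_net finite_subset by blast
  have step: "\<rho> g * v g = (\<Sum>H\<in>components E. \<rho> g * v (g \<inter> H))" if g: "g \<in> networks n" for g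
  proof (cases "\<rho> g = 0")
    case True then show ?thesis by simp
  next
    case False
    then have "\<rho> g > 0" using assms(3) g unfolding is_prob_dist_def by force
    then have "g \<subseteq> E" using g unfolding E_def extent_def support_def by auto
    then show ?thesis using key[OF assms(2) _ E] by (simp add: sum_distrib_left)
  qed
  have "expected_wealth n v \<rho> = (\<Sum>g\<in>networks n. \<Sum>H\<in>components E. \<rho> g * v (g \<inter> H))"
    unfolding expected_wealth_def using step by simp
  also have "\<dots> = (\<Sum>H\<in>components E. \<Sum>g\<in>networks n. \<rho> g * v (g \<inter> H))"
    by (rule sum.swap)
  also have "\<dots> = (\<Sum>H\<in>components E. \<Sum>h'\<in>Pow H. restrict_dist n \<rho> H h' * v h')"
  proof (rule sum.cong[OF refl])
    fix H assume "H \<in> components E"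
    then have "H \<subseteq> complete_net n" using E unfolding components_def by auto
    then show "(\<Sum>g\<in>networks n. \<rho> g * v (g \<inter> H)) = (\<Sum>h'\<in>Pow H. restrict_dist n \<rho> H h' * v h')"
      by (rule reindex)
  qed
  finally show ?thesis unfolding E_def .
qed

end
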